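(* Let $f:\mathbb{R}^p\to\mathbb{R}$ be convex and differentiable with Lipschitz gradient, $g_j:\mathbb{R}\to\mathbb{R}\cup\{+\infty\}$ proper closed convex, $g(x)=\sum_jg_j(x_j)$, and let $x^\star$ be a minimizer of $f+g$ satisfying $-\nabla f(x^\star)\in\operatorname{ri}(\partial g(x^\star))$, with $f$ $\mathcal{C}^2$ near $x^\star$. Let $\gamma_j>0$. Then for all $j\in\mathcal{S}^c$, $\operatorname{prox}_{\gamma_jg_j}$ is constant on a neighbourhood of $x^\star_j-\gamma_j\nabla_jf(x^\star)$. Moreover, the map $x\mapsto\operatorname{prox}_{\gamma_jg_j}(x_j-\gamma_j\nabla_jf(x))$ is differentiable at $x^\star$ with gradient $0$.
   Context: $\mathcal{S}=\mathcal{S}_{x^\star}=\{j:\partial g_j(x^\star_j)\text{ is a singleton}\}$, $\mathcal{S}^c=[p]\setminus\mathcal{S}$. $\operatorname{ri}$ denotes relative interior. $\operatorname{prox}_{\gamma h}(v)=\arg\min_y\frac1{2\gamma}(v-y)^2+h(y)$. *)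

theory Defs
  imports "HOL-Analysis.Analysis"
begin

text \<open>Extended-real-valued functions \<open>h :: 'a \<Rightarrow> ereal\<close> model functions into
  \<open>\<real> \<union> {+\<infinity>}\<close>.\<close>

definition epigraph :: "('a \<Rightarrow> ereal) \<Rightarrow> ('a \<times> real) set" where
  "epigraph h = {(x, t). h x \<le> ereal t}"

definition proper_fun :: "('a \<Rightarrow> ereal) \<Rightarrow> bool" where
  "proper_fun h \<longleftrightarrow> (\<forall>x. h x \<noteq> -\<infinity>) \<and> (\<exists>x. h x \<noteq> \<infinity>)"

definition closed_convex_proper :: "('a::real_normed_vector \<Rightarrow> ereal) \<Rightarrow> bool" where
  "closed_convex_proper h \<longleftrightarrow> proper_fun h \<and> convex (epigraph h) \<and> closed (epigraph h)"

definition subdiff :: "('a::real_inner \<Rightarrow> ereal) \<Rightarrow> 'a \<Rightarrow> 'a set" where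
  "subdiff h x = {v. \<forall>y. h x + ereal (v \<bullet> (y - x)) \<le> h y}"

definition prox :: "real \<Rightarrow> (real \<Rightarrow> ereal) \<Rightarrow> real \<Rightarrow> real" where
  "prox \<gamma> h v = (THE y. \<forall>z. ereal ((v - y)^2 / (2 * \<gamma>)) + h y
                              \<le> ereal ((v - z)^2 / (2 * \<gamma>)) + h z)"

definition sep_sum :: "('n::finite \<Rightarrow> real \<Rightarrow> ereal) \<Rightarrow> real^'n \<Rightarrow> ereal" where
  "sep_sum g x = (\<Sum>j\<in>UNIV. g j (x $ j))"

end

theory Submission
  imports Defs
begin

lemma prox_const:
  fixes h :: "real \<Rightarrow> ereal"
  assumes ha: "h p = ereal a" and gp: "\<gamma> > 0"
    and s1: "v - \<delta> \<in> subdiff h p" and s2: "v + \<delta> \<in> subdiff h p"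
    and u: "\<bar>u - (p + \<gamma> * v)\<bar> < \<gamma> * \<delta>"
  shows "prox \<gamma> h u = p"
proof -
  define s where "s = (u - p) / \<gamma>"
  have sv: "\<bar>s - v\<bar> \<le> \<delta>"
  proof -
    have "s - v = (u - (p + \<gamma> * v)) / \<gamma>" using gp by (simp add: s_def field_simps)
    hence "\<bar>s - v\<bar> = \<bar>u - (p + \<gamma> * v)\<bar> / \<gamma>" using gp by simp
    also have "\<dots> \<le> \<delta>" using u gp by (simp add: divide_le_eq mult.commute)
    finally show ?thesis .
  qed
  have key: "ereal ((u - p)^2 / (2*\<gamma>) + a + (z - p)^2 / (2*\<gamma>)) \<le> ereal ((u - z)^2 / (2*\<gamma>)) + h z" for z
  proof -
    have e1: "ereal a + ereal ((v - \<delta>) * (z - p)) \<le> h z" using s1 ha unfolding subdiff_def by auto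
    have e2: "ereal a + ereal ((v + \<delta>) * (z - p)) \<le> h z" using s2 ha unfolding subdiff_def by auto
    have "ereal (a + s * (z - p)) \<le> h z"
    proof (cases "z \<ge> p")
      case True
      have "s * (z - p) \<le> (v + \<delta>) * (z - p)" using True sv by (intro mult_right_mono) auto
      hence "ereal (a + s * (z - p)) \<le> ereal a + ereal ((v + \<delta>) * (z - p))" by simp
      thus ?thesis using e2 by (rule order_trans)
    next
      case False
      have "s * (z - p) \<le> (v - \<delta>) * (z - p)" using False sv by (intro mult_right_mono_neg) auto
      hence "ereal (a + s * (z - p)) \<le> ereal a + ereal ((v - \<delta>) * (z - p))" by simp
      thus ?thesis using e1 by (rule order_trans)
    qed
    hence "ereal ((u - z)^2 / (2*\<gamma>)) + ereal (a + s * (z - p)) \<le> ereal ((u - z)^2 / (2*\<gamma>)) + h z"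
      by (rule add_left_mono)
    moreover have "(u - z)^2 / (2*\<gamma>) + (a + s * (z - p)) = (u - p)^2 / (2*\<gamma>) + a + (z - p)^2 / (2*\<gamma>)"
      using gp by (simp add: s_def field_simps power2_eq_square)
    ultimately show ?thesis by simp
  qed
  have Fp: "ereal ((u - p)^2 / (2*\<gamma>)) + h p = ereal ((u - p)^2 / (2*\<gamma>) + a)" using ha by simp
  show ?thesis unfolding prox_def
  proof (rule the_equality)
    show "\<forall>z. ereal ((u - p)\<^sup>2 / (2 * \<gamma>)) + h p \<le> ereal ((u - z)\<^sup>2 / (2 * \<gamma>)) + h z"
    proof
      fix z
      have "ereal ((u - p)\<^sup>2 / (2 * \<gamma>)) + h p \<le> ereal ((u - p)^2 / (2*\<gamma>) + a + (z - p)^2 / (2*\<gamma>))"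
        using gp Fp by simp
      thus "ereal ((u - p)\<^sup>2 / (2 * \<gamma>)) + h p \<le> ereal ((u - z)\<^sup>2 / (2 * \<gamma>)) + h z"
        using key[of z] by (rule order_trans)
    qed
  next
    fix y assume "\<forall>z. ereal ((u - y)\<^sup>2 / (2 * \<gamma>)) + h y \<le> ereal ((u - z)\<^sup>2 / (2 * \<gamma>)) + h z"
    hence "ereal ((u - y)\<^sup>2 / (2 * \<gamma>)) + h y \<le> ereal ((u - p)^2 / (2*\<gamma>) + a)" using Fp by metis
    with key[of y] have "(u - p)^2 / (2*\<gamma>) + a + (y - p)^2 / (2*\<gamma>) \<le> (u - p)^2 / (2*\<gamma>) + a"
      using order_trans ereal_less_eq(3) by blast
    hence "(y - p)^2 / (2*\<gamma>) \<le> 0" by simp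
    hence "(y - p)^2 \<le> 0" using gp by (simp add: divide_le_0_iff)
    thus "y = p" by simp
  qed
qed

lemma subdiff_sep_coord:
  fixes g :: "'n::finite \<Rightarrow> real \<Rightarrow> ereal"
  assumes fin: "\<And>k. g k (xs$k) = ereal (a k)" and w: "w \<in> subdiff (sep_sum g) xs"
  shows "w$j \<in> subdiff (g j) (xs$j)"
  unfolding subdiff_def
proof (intro CollectI allI)
  fix z
  define y where "y = (\<chi> k. if k = j then z else xs$k)"
  define R where "R = (\<Sum>k\<in>UNIV-{j}. a k)"
  have "sep_sum g y = g j (y$j) + (\<Sum>k\<in>UNIV-{j}. g k (y$k))"
    unfolding sep_sum_def by (rule sum.remove) auto
  also have "(\<Sum>k\<in>UNIV-{j}. g k (y$k)) = (\<Sum>k\<in>UNIV-{j}. ereal (a k))"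
    by (rule sum.cong) (auto simp: y_def fin)
  finally have sy: "sep_sum g y = g j z + ereal R" by (simp add: y_def R_def)
  have "sep_sum g xs = g j (xs$j) + (\<Sum>k\<in>UNIV-{j}. g k (xs$k))"
    unfolding sep_sum_def by (rule sum.remove) auto
  also have "(\<Sum>k\<in>UNIV-{j}. g k (xs$k)) = (\<Sum>k\<in>UNIV-{j}. ereal (a k))"
    by (rule sum.cong) (auto simp: fin)
  finally have sx: "sep_sum g xs = ereal (a j + R)" by (simp add: fin R_def)
  have "y - xs = axis j (z - xs$j)"
    by (simp add: vec_eq_iff y_def axis_def)
  hence ip: "w \<bullet> (y - xs) = w$j * (z - xs$j)" by (simp add: inner_axis)
  from w have "sep_sum g xs + ereal (w \<bullet> (y - xs)) \<le> sep_sum g y" unfolding subdiff_def by blast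
  hence *: "ereal (a j + R) + ereal (w$j * (z - xs$j)) \<le> g j z + ereal R" using sx sy ip by simp
  show "g j (xs $ j) + ereal (w $ j \<bullet> (z - xs $ j)) \<le> g j z"
  proof (cases "g j z")
    case (real r)
    thus ?thesis using * fin[of j] by (simp add: inner_real_def)
  next
    case PInf thus ?thesis by simp
  next
    case MInf thus ?thesis using * by simp
  qed
qed

lemma subdiff_sep_prod:
  fixes g :: "'n::finite \<Rightarrow> real \<Rightarrow> ereal"
  assumes "\<And>k. w$k \<in> subdiff (g k) (xs$k)"
  shows "w \<in> subdiff (sep_sum g) xs"
  unfolding subdiff_def
proof (intro CollectI allI)
  fix y
  have "sep_sum g xs + ereal (w \<bullet> (y - xs)) = (\<Sum>k\<in>UNIV. g k (xs$k) + ereal (w$k * (y$k - xs$k)))"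
    by (simp add: sep_sum_def sum.distrib inner_vec_def)
  also have "\<dots> \<le> (\<Sum>k\<in>UNIV. g k (y$k))"
  proof (intro sum_mono)
    fix k
    have "\<forall>t. g k (xs$k) + ereal (w$k * (t - xs$k)) \<le> g k t"
      using assms[of k] unfolding subdiff_def inner_real_def by blast
    thus "g k (xs$k) + ereal (w$k * (y$k - xs$k)) \<le> g k (y$k)" by blast
  qed
  finally show "sep_sum g xs + ereal (w \<bullet> (y - xs)) \<le> sep_sum g y" by (simp add: sep_sum_def)
qed

lemma rel_interior_two:
  fixes v w :: "'a::euclidean_space"
  assumes v: "v \<in> rel_interior S" and w: "w \<in> S" and ne: "w \<noteq> v"
  shows "\<exists>\<tau>>0. v + \<tau> *\<^sub>R (w - v) \<in> S \<and> v - \<tau> *\<^sub>R (w - v) \<in> S"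
proof -
  from v obtain e where e: "e > 0" "ball v e \<inter> affine hull S \<subseteq> S" and vS: "v \<in> S"
    unfolding mem_rel_interior_ball by blast
  define \<tau> where "\<tau> = e / (2 * norm (w - v))"
  have np: "norm (w - v) > 0" using ne by simp
  have tp: "\<tau> > 0" using e np by (simp add: \<tau>_def)
  have nt: "norm (\<tau> *\<^sub>R (w - v)) < e" using e np by (simp add: \<tau>_def)
  have aff: "(1 - t) *\<^sub>R v + t *\<^sub>R w \<in> affine hull S" for t
    by (rule mem_affine[OF affine_affine_hull]) (use vS w hull_subset[of S affine] in auto)
  have "v + \<tau> *\<^sub>R (w - v) = (1 - \<tau>) *\<^sub>R v + \<tau> *\<^sub>R w" by (simp add: algebra_simps)
  moreover have "v - \<tau> *\<^sub>R (w - v) = (1 - (-\<tau>)) *\<^sub>R v + (-\<tau>) *\<^sub>R w" by (simp add: algebra_simps)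
  moreover have "v + \<tau> *\<^sub>R (w - v) \<in> ball v e" "v - \<tau> *\<^sub>R (w - v) \<in> ball v e"
    using nt by (auto simp: dist_norm)
  ultimately show ?thesis using e(2) aff tp by (metis IntI subsetD)
qed

theorem lemma3:
  fixes f :: "real^'n \<Rightarrow> real"
    and grad :: "real^'n \<Rightarrow> real^'n"
    and g :: "'n \<Rightarrow> real \<Rightarrow> ereal"
    and xs :: "real^'n"
    and \<gamma> :: "'n \<Rightarrow> real"
  assumes f_convex: "convex_on UNIV f"
    and f_grad: "\<And>x. (f has_derivative (\<lambda>h. grad x \<bullet> h)) (at x)"
    and grad_lip: "\<exists>L. L-lipschitz_on UNIV grad"
    and g_ccp: "\<And>j. closed_convex_proper (g j)"
    and xs_min: "\<And>x. ereal (f xs) + sep_sum g xs \<le> ereal (f x) + sep_sum g x"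
    and qualif: "- grad xs \<in> rel_interior (subdiff (sep_sum g) xs)"
    and f_C2: "\<exists>U H. open U \<and> xs \<in> U \<and>
                 (\<forall>x\<in>U. (grad has_derivative blinfun_apply (H x)) (at x)) \<and>
                 continuous_on U (H :: real^'n \<Rightarrow> ((real^'n) \<Rightarrow>\<^sub>L (real^'n)))"
    and gamma_pos: "\<And>j. \<gamma> j > 0"
  shows "\<forall>j. \<not> is_singleton (subdiff (g j) (xs $ j)) \<longrightarrow>
           (\<exists>e>0. \<exists>c. \<forall>u. \<bar>u - (xs $ j - \<gamma> j * grad xs $ j)\<bar> < e \<longrightarrow>
                                prox (\<gamma> j) (g j) u = c)
           \<and> ((\<lambda>x. prox (\<gamma> j) (g j) (x $ j - \<gamma> j * grad x $ j)) has_derivative (\<lambda>h. 0)) (at xs)"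
proof (intro allI impI conjI)
  fix j
  assume ns: "\<not> is_singleton (subdiff (g j) (xs $ j))"
  define S where "S = subdiff (sep_sum g) xs"
  define v where "v = - grad xs"
  have vS: "v \<in> S" using qualif rel_interior_subset unfolding S_def v_def by blast
  have nm: "g k t \<noteq> -\<infinity>" for k t using g_ccp[of k] unfolding closed_convex_proper_def proper_fun_def by blast
  have ex: "\<exists>t. g k t \<noteq> \<infinity>" for k using g_ccp[of k] unfolding closed_convex_proper_def proper_fun_def by blast
  define x0 where "x0 = (\<chi> k. SOME t. g k t \<noteq> \<infinity>)"
  have "g k (x0$k) \<noteq> \<infinity>" for k unfolding x0_def using someI_ex[OF ex[of k]] by simp
  hence s0: "sep_sum g x0 \<noteq> \<infinity>" unfolding sep_sum_def by (simp add: sum_Pinfty)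
  have sxs: "sep_sum g xs \<noteq> \<infinity>"
  proof
    assume "sep_sum g xs = \<infinity>"
    moreover have "sep_sum g xs + ereal (v \<bullet> (x0 - xs)) \<le> sep_sum g x0" using vS unfolding S_def subdiff_def by blast
    ultimately show False using s0 by simp
  qed
  define a where "a k = real_of_ereal (g k (xs$k))" for k
  have fin: "g k (xs$k) = ereal (a k)" for k
  proof -
    have "g k (xs$k) \<noteq> \<infinity>" using sxs unfolding sep_sum_def by (simp add: sum_Pinfty)
    thus ?thesis using nm[of k "xs$k"] unfolding a_def by (cases "g k (xs$k)") auto
  qed
  have vj: "v$k \<in> subdiff (g k) (xs$k)" for k by (rule subdiff_sep_coord[OF fin vS[unfolded S_def]])
  obtain wj where wj: "wj \<in> subdiff (g j) (xs$j)" "wj \<noteq> v$j"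
  proof -
    have "\<exists>wj\<in>subdiff (g j) (xs$j). wj \<noteq> v$j"
    proof (rule ccontr)
      assume "\<not> ?thesis"
      hence "subdiff (g j) (xs$j) = {v$j}" using vj[of j] by blast
      thus False using ns unfolding is_singleton_def by blast
    qed
    thus ?thesis using that by blast
  qed
  define w where "w = (\<chi> k. if k = j then wj else v$k)"
  have wS: "w \<in> S" unfolding S_def
    by (rule subdiff_sep_prod) (use vj wj in \<open>auto simp: w_def\<close>)
  have wv: "w \<noteq> v" using wj(2) by (auto simp: w_def vec_eq_iff)
  obtain \<tau> where tp: "\<tau> > 0" and t1: "v + \<tau> *\<^sub>R (w - v) \<in> S" and t2: "v - \<tau> *\<^sub>R (w - v) \<in> S"
    using rel_interior_two[OF qualif[folded S_def v_def] wS wv] by blast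
  have c1: "v$j + \<tau> * (wj - v$j) \<in> subdiff (g j) (xs$j)"
    using subdiff_sep_coord[OF fin t1[unfolded S_def], of j] by (simp add: w_def)
  have c2: "v$j - \<tau> * (wj - v$j) \<in> subdiff (g j) (xs$j)"
    using subdiff_sep_coord[OF fin t2[unfolded S_def], of j] by (simp add: w_def)
  define \<delta> where "\<delta> = \<tau> * \<bar>wj - v$j\<bar>"
  have dp: "\<delta> > 0" using tp wj(2) by (simp add: \<delta>_def)
  have d1: "v$j - \<delta> \<in> subdiff (g j) (xs$j)" and d2: "v$j + \<delta> \<in> subdiff (g j) (xs$j)"
  proof -
    have "(v$j - \<delta> \<in> subdiff (g j) (xs$j)) \<and> (v$j + \<delta> \<in> subdiff (g j) (xs$j))"
    proof (cases "wj \<ge> v$j")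
      case True
      hence "\<delta> = \<tau> * (wj - v$j)" by (simp add: \<delta>_def)
      thus ?thesis using c1 c2 by simp
    next
      case False
      hence "\<delta> = - (\<tau> * (wj - v$j))" by (simp add: \<delta>_def algebra_simps)
      thus ?thesis using c1 c2 by simp
    qed
    thus "v$j - \<delta> \<in> subdiff (g j) (xs$j)" "v$j + \<delta> \<in> subdiff (g j) (xs$j)" by auto
  qed
  define ctr where "ctr = xs $ j - \<gamma> j * grad xs $ j"
  have ctr_eq: "ctr = xs$j + \<gamma> j * v$j" by (simp add: ctr_def v_def)
  have pc: "prox (\<gamma> j) (g j) u = xs$j" if "\<bar>u - ctr\<bar> < \<gamma> j * \<delta>" for u
    by (rule prox_const[OF fin gamma_pos d1 d2]) (use that ctr_eq in simp)
  have ep: "\<gamma> j * \<delta> > 0" using gamma_pos[of j] dp by simp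
  show "(\<exists>e>0. \<exists>c. \<forall>u. \<bar>u - (xs $ j - \<gamma> j * grad xs $ j)\<bar> < e \<longrightarrow> prox (\<gamma> j) (g j) u = c)"
    using pc ep unfolding ctr_def by blast
  obtain U H where UH: "open U" "xs \<in> U" "\<forall>x\<in>U. (grad has_derivative blinfun_apply (H x)) (at x)"
    using f_C2 by blast
  have "isCont grad xs" using UH by (blast intro: has_derivative_continuous)
  hence ic: "isCont (\<lambda>x. x $ j - \<gamma> j * grad x $ j) xs" by (intro continuous_intros)
  obtain d where d: "d > 0" "\<And>x. dist x xs < d \<Longrightarrow> dist (x $ j - \<gamma> j * grad x $ j) ctr < \<gamma> j * \<delta>"
    using ic ep unfolding continuous_at_eps_delta ctr_def by blast
  show "((\<lambda>x. prox (\<gamma> j) (g j) (x $ j - \<gamma> j * grad x $ j)) has_derivative (\<lambda>h. 0)) (at xs)"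
  proof (rule has_derivative_transform_within[OF has_derivative_const d(1)])
    fix x :: "real^'n" assume "x \<in> UNIV" "dist x xs < d"
    hence "\<bar>(x $ j - \<gamma> j * grad x $ j) - ctr\<bar> < \<gamma> j * \<delta>" using d(2) by (simp add: dist_real_def)
    thus "xs $ j = prox (\<gamma> j) (g j) (x $ j - \<gamma> j * grad x $ j)" using pc by simp
  qed simp
qed

end
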